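(* Fix $\Delta>0$. In the $\mathrm{EDD}(\lambda)$ model with a global clock, the probability that a run of the CORE$(\Delta)$-Message-Chain hybrid protocol is correct is at least $(1-e^{-\lambda\Delta})^n$.
   Context: Agents $i_0,i_1,\ldots,i_n$ share an accurate global clock and are connected by a complete reliable network; the delay of each message is an independent exponential random variable with parameter $\lambda$. At time $0$ the supervisor $i_0$ receives an external input. The CORE$(\Delta)$-Message-Chain hybrid protocol: at time $0$, $i_0$ sends a "trigger" message to each of $i_1,\ldots,i_n$ and additionally sends an "act" message to $i_1$. A worker $i_k$ that receives a chain message (the "act" message for $i_1$, or the chain message from $i_{k-1}$ for $k\ge2$) before having acted performs its action $\alpha_k$ immediately, sends a chain message to $i_{k+1}$ (if $k<n$), and terminates. Until then, $i_k$ follows CORE$(\Delta)$: upon receiving the trigger it waits until the global time is at least $\Delta$ and then performs $\alpha_k$ (immediately if the trigger arrives after $\Delta$) and terminates; a terminated agent does not propagate the chain. With $t_k$ the time at which $i_k$ performs $\alpha_k$, a run is correct if $t_1\le t_2\le\cdots\le t_n<\infty$. *)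

theory Defs
  imports "HOL-Probability.Probability"
begin

text \<open>Trig k: trigger from i0 to worker k (1 \<le> k \<le> n);
  Act: act message from i0 to worker 1;
  Chain k: chain message from worker k to worker k+1 (1 \<le> k \<le> n-1).\<close>
datatype msg = Trig nat | Act | Chain nat

definition msgs :: "nat \<Rightarrow> msg set" where
  "msgs n = Trig ` {1..n} \<union> {Act} \<union> Chain ` {1..<n}"

text \<open>Given the delay of every (potential) message, compute for worker k
  the pair (t_k, b_k) where t_k is the time worker k performs its action and
  b_k says whether it acted upon a chain message (and hence propagates the
  chain).  Index 0 is the supervisor, which "sends the chain" at time 0.\<close>
fun hybrid :: "real \<Rightarrow> (msg \<Rightarrow> real) \<Rightarrow> nat \<Rightarrow> real \<times> bool" where
  "hybrid \<Delta> d 0 = (0, True)"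
| "hybrid \<Delta> d (Suc k) =
     (let (tp, cp) = hybrid \<Delta> d k;
          core = max (d (Trig (Suc k))) \<Delta>;
          delay = (if k = 0 then d Act else d (Chain k))
      in if cp \<and> tp + delay \<le> core then (tp + delay, True) else (core, False))"

definition act_time :: "real \<Rightarrow> (msg \<Rightarrow> real) \<Rightarrow> nat \<Rightarrow> real" where
  "act_time \<Delta> d k = fst (hybrid \<Delta> d k)"

definition correct_run :: "real \<Rightarrow> nat \<Rightarrow> (msg \<Rightarrow> real) \<Rightarrow> bool" where
  "correct_run \<Delta> n d \<longleftrightarrow> (\<forall>k\<in>{1..<n}. act_time \<Delta> d k \<le> act_time \<Delta> d (Suc k))"

end

theory Submission
  imports Defs
begin

lemma hybrid_Suc_fst:
  "fst (hybrid \<Delta> d (Suc k)) =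
    (if snd (hybrid \<Delta> d k) \<and> fst (hybrid \<Delta> d k) + (if k = 0 then d Act else d (Chain k)) \<le> max (d (Trig (Suc k))) \<Delta>
     then fst (hybrid \<Delta> d k) + (if k = 0 then d Act else d (Chain k)) else max (d (Trig (Suc k))) \<Delta>)"
  by (simp add: Let_def split: prod.split)

lemma hybrid_Suc_snd:
  "snd (hybrid \<Delta> d (Suc k)) =
    (snd (hybrid \<Delta> d k) \<and> fst (hybrid \<Delta> d k) + (if k = 0 then d Act else d (Chain k)) \<le> max (d (Trig (Suc k))) \<Delta>)"
  by (simp add: Let_def split: prod.split)

lemma inv_hybrid:
  assumes "\<Delta> > 0" "\<And>k. k \<in> {1..n} \<Longrightarrow> d (Trig k) \<le> \<Delta>" "k \<le> n"
  shows "fst (hybrid \<Delta> d k) \<le> \<Delta> \<and> (\<not> snd (hybrid \<Delta> d k) \<longrightarrow> fst (hybrid \<Delta> d k) = \<Delta>)"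
  using assms(3)
proof (induction k)
  case 0
  then show ?case using assms(1) by simp
next
  case (Suc k)
  have "max (d (Trig (Suc k))) \<Delta> = \<Delta>" using assms(2)[of "Suc k"] Suc.prems by auto
  then show ?case using Suc by (auto simp del: hybrid.simps simp: hybrid_Suc_fst hybrid_Suc_snd)
qed

lemma correct_suff:
  assumes "\<Delta> > 0" "\<And>k. k \<in> {1..n} \<Longrightarrow> d (Trig k) \<le> \<Delta>"
    "\<And>k. k \<in> {1..<n} \<Longrightarrow> d (Chain k) > 0"
  shows "correct_run \<Delta> n d"
  unfolding correct_run_def act_time_def
proof
  fix k assume k: "k \<in> {1..<n}"
  have I: "fst (hybrid \<Delta> d k) \<le> \<Delta>" using inv_hybrid[of \<Delta> n d k] assms k by auto
  have "max (d (Trig (Suc k))) \<Delta> = \<Delta>" using assms(2)[of "Suc k"] k by auto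
  moreover have "d (Chain k) > 0" using assms(3) k by auto
  ultimately show "fst (hybrid \<Delta> d k) \<le> fst (hybrid \<Delta> d (Suc k))"
    using I k by (auto simp del: hybrid.simps simp: hybrid_Suc_fst)
qed

lemma hybrid_meas:
  assumes Dm: "\<And>m. m \<in> msgs n \<Longrightarrow> D m \<in> borel_measurable M" and "k \<le> n"
  shows "(\<lambda>\<omega>. fst (hybrid \<Delta> (\<lambda>m. D m \<omega>) k)) \<in> borel_measurable M \<and>
         (\<lambda>\<omega>. snd (hybrid \<Delta> (\<lambda>m. D m \<omega>) k)) \<in> measurable M (count_space UNIV)"
  using assms(2)
proof (induction k)
  case 0
  then show ?case by simp
next
  case (Suc k)
  define F where "F = (\<lambda>\<omega>. fst (hybrid \<Delta> (\<lambda>m. D m \<omega>) k))"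
  define C where "C = (\<lambda>\<omega>. snd (hybrid \<Delta> (\<lambda>m. D m \<omega>) k))"
  define dl where "dl = (\<lambda>\<omega>. if k = 0 then D Act \<omega> else D (Chain k) \<omega>)"
  have [measurable]: "F \<in> borel_measurable M" "C \<in> measurable M (count_space UNIV)" using Suc unfolding F_def C_def by auto
  have [measurable]: "D (Trig (Suc k)) \<in> borel_measurable M"
    using Dm[of "Trig (Suc k)"] Suc.prems by (auto simp: msgs_def)
  have [measurable]: "dl \<in> borel_measurable M"
  proof (cases "k = 0")
    case True then show ?thesis using Dm[of Act] by (simp add: dl_def msgs_def)
  next
    case False then show ?thesis using Dm[of "Chain k"] Suc.prems by (simp add: dl_def msgs_def)
  qed
  have e1: "(\<lambda>\<omega>. fst (hybrid \<Delta> (\<lambda>m. D m \<omega>) (Suc k))) =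
     (\<lambda>\<omega>. if C \<omega> \<and> F \<omega> + dl \<omega> \<le> max (D (Trig (Suc k)) \<omega>) \<Delta> then F \<omega> + dl \<omega> else max (D (Trig (Suc k)) \<omega>) \<Delta>)"
    unfolding F_def C_def dl_def by (simp only: hybrid_Suc_fst)
  have e2: "(\<lambda>\<omega>. snd (hybrid \<Delta> (\<lambda>m. D m \<omega>) (Suc k))) =
     (\<lambda>\<omega>. C \<omega> \<and> F \<omega> + dl \<omega> \<le> max (D (Trig (Suc k)) \<omega>) \<Delta>)"
    unfolding F_def C_def dl_def by (simp only: hybrid_Suc_snd)
  show ?case unfolding e1 e2 by measurable
qed

lemma msgs_finite: "finite (msgs n)" by (simp add: msgs_def)

theorem theorem4:
  fixes M :: "'a measure" and D :: "msg \<Rightarrow> 'a \<Rightarrow> real"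
    and l \<Delta> :: real and n :: nat
  assumes "prob_space M"
    and "l > 0" and "\<Delta> > 0"
    and "prob_space.indep_vars M (\<lambda>_. borel) D (msgs n)"
    and "\<And>m. m \<in> msgs n \<Longrightarrow> distributed M lborel (D m) (exponential_density l)"
  shows "measure M {\<omega> \<in> space M. correct_run \<Delta> n (\<lambda>m. D m \<omega>)}
           \<ge> (1 - exp (- l * \<Delta>)) ^ n"
proof -
  interpret P: prob_space M by fact
  have rv: "\<And>m. m \<in> msgs n \<Longrightarrow> D m \<in> borel_measurable M"
    using assms(4) unfolding P.indep_vars_def2 by auto
  have ind: "P.indep_sets (\<lambda>i. {D i -` A \<inter> space M | A. A \<in> sets borel}) (msgs n)"
    using assms(4) unfolding P.indep_vars_def2 by auto
  define S where "S m = (case m of Trig _ \<Rightarrow> {..\<Delta>} | _ \<Rightarrow> {0<..})" for m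
  define A where "A m = D m -` S m \<inter> space M" for m
  have Act: "Act \<in> msgs n" by (simp add: msgs_def)
  have Sb: "S m \<in> sets borel" for m by (auto simp: S_def split: msg.split)
  have prodeq: "P.prob (\<Inter>m\<in>msgs n. A m) = (\<Prod>m\<in>msgs n. P.prob (A m))"
    by (rule P.indep_setsD[OF ind]) (use Act msgs_finite Sb in \<open>auto simp: A_def\<close>)
  have pT: "P.prob (A (Trig k)) = 1 - exp (- l * \<Delta>)" if "k \<in> {1..n}" for k
  proof -
    have "A (Trig k) = {x \<in> space M. D (Trig k) x \<le> \<Delta>}" by (auto simp: A_def S_def)
    moreover have "distributed M lborel (D (Trig k)) (exponential_density l)"
      using assms(5) that by (auto simp: msgs_def)
    ultimately show ?thesis using P.exponential_distributedD_le[of "D (Trig k)" l \<Delta>] assms(2,3)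
      by (simp add: mult.commute)
  qed
  have pO: "P.prob (A m) = 1" if "m \<in> insert Act (Chain ` {1..<n})" for m
  proof -
    have "A m = {x \<in> space M. 0 < D m x}" using that by (auto simp: A_def S_def)
    moreover have "distributed M lborel (D m) (exponential_density l)"
      using assms(5) that by (auto simp: msgs_def)
    ultimately show ?thesis using P.exponential_distributedD_gt[of "D m" l 0] assms(2,3)
      by simp
  qed
  have split: "msgs n = Trig ` {1..n} \<union> insert Act (Chain ` {1..<n})" by (auto simp: msgs_def)
  have "(\<Prod>m\<in>msgs n. P.prob (A m)) = (\<Prod>m\<in>Trig ` {1..n}. P.prob (A m)) * (\<Prod>m\<in>insert Act (Chain ` {1..<n}). P.prob (A m))"
    unfolding split by (rule prod.union_disjoint) auto
  also have "(\<Prod>m\<in>insert Act (Chain ` {1..<n}). P.prob (A m)) = 1"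
    using pO by (intro prod.neutral) auto
  also have "(\<Prod>m\<in>Trig ` {1..n}. P.prob (A m)) = (\<Prod>k\<in>{1..n}. P.prob (A (Trig k)))"
    by (subst prod.reindex) (auto simp: inj_on_def)
  also have "\<dots> = (\<Prod>k\<in>{1..n}. 1 - exp (- l * \<Delta>))" using pT by (intro prod.cong) auto
  finally have eq: "P.prob (\<Inter>m\<in>msgs n. A m) = (1 - exp (- l * \<Delta>)) ^ n" using prodeq by simp
  have sub: "(\<Inter>m\<in>msgs n. A m) \<subseteq> {\<omega> \<in> space M. correct_run \<Delta> n (\<lambda>m. D m \<omega>)}"
  proof
    fix \<omega> assume w: "\<omega> \<in> (\<Inter>m\<in>msgs n. A m)"
    hence sp: "\<omega> \<in> space M" using Act by (auto simp: A_def split: if_splits)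
    have "correct_run \<Delta> n (\<lambda>m. D m \<omega>)"
    proof (rule correct_suff[OF assms(3)])
      fix k assume "k \<in> {1..n}"
      hence "Trig k \<in> msgs n" by (auto simp: msgs_def)
      hence "\<omega> \<in> A (Trig k)" using w by blast
      thus "D (Trig k) \<omega> \<le> \<Delta>" by (auto simp: A_def S_def)
    next
      fix k assume "k \<in> {1..<n}"
      hence "Chain k \<in> msgs n" by (auto simp: msgs_def)
      hence "\<omega> \<in> A (Chain k)" using w by blast
      thus "D (Chain k) \<omega> > 0" by (auto simp: A_def S_def)
    qed
    thus "\<omega> \<in> {\<omega> \<in> space M. correct_run \<Delta> n (\<lambda>m. D m \<omega>)}" using sp by auto
  qed
  have meas: "{\<omega> \<in> space M. correct_run \<Delta> n (\<lambda>m. D m \<omega>)} \<in> sets M"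
    unfolding correct_run_def
  proof (rule sets.sets_Collect_finite_All)
    fix k assume k: "k \<in> {1..<n}"
    have [measurable]: "(\<lambda>\<omega>. act_time \<Delta> (\<lambda>m. D m \<omega>) k) \<in> borel_measurable M"
      "(\<lambda>\<omega>. act_time \<Delta> (\<lambda>m. D m \<omega>) (Suc k)) \<in> borel_measurable M"
      using hybrid_meas[of n D M k \<Delta>] hybrid_meas[of n D M "Suc k" \<Delta>] rv k
      by (auto simp: act_time_def)
    show "{\<omega> \<in> space M. act_time \<Delta> (\<lambda>m. D m \<omega>) k \<le> act_time \<Delta> (\<lambda>m. D m \<omega>) (Suc k)} \<in> sets M"
      by measurable
  qed simp
  have "P.prob (\<Inter>m\<in>msgs n. A m) \<le> P.prob {\<omega> \<in> space M. correct_run \<Delta> n (\<lambda>m. D m \<omega>)}"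
    by (rule P.finite_measure_mono[OF sub meas])
  with eq show ?thesis by simp
qed

end
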